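(* Let $N\ge2$, $g\ge1$, and let $A(z)=\sum_{k=0}^{g-1}z^kA^{(k)}$ ($A^{(g-1)}\ne0$) be a purely non-diagonal polynomial loop $\mathbb{T}\to\mathrm{U}_N(\mathbb{C})$ of genus $g$. Let $T_i$, $i=0,\dots,N-1$, be the operators on $L^2(\mathbb{T})$ given by $(T_if)(z)=m_i(z)f(z^N)$, $m_i(z)=\sum_{j=0}^{N-1}A_{i,j}(z^N)z^j$. Let $r_0=\lfloor (gN-1)/(N-1)\rfloor$, $\mathcal{K}=\operatorname{span}\{z^{-k}:0\le k\le r_0\}$, $P$ the orthogonal projection onto $\mathcal{K}$, $V_i:=PT_i|_{\mathcal{K}}\in\mathcal{B}(\mathcal{K})$, and $\sigma\colon\mathcal{B}(\mathcal{K})\to\mathcal{B}(\mathcal{K})$, $\sigma(X)=\sum_iV_iXV_i^*$. Then there is no faithful state $\rho$ on $\mathcal{B}(\mathcal{K})$ satisfying $\rho\circ\sigma=\rho$.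
   Context: A polynomial loop $D\colon\mathbb{T}\to\mathrm{U}_d(\mathbb{C})$ is diagonal if $D(z)=V\,\mathrm{diag}(z^{n_0},\dots,z^{n_{d-1}})$ for some $V\in\mathrm{U}_d(\mathbb{C})$ and integers $n_i\ge0$. A polynomial loop $A\colon\mathbb{T}\to\mathrm{U}_N(\mathbb{C})$ is purely non-diagonal if there is no decomposition $N=d_0+b+d_1$ with $d_0>0$ or $d_1>0$, diagonal loops $D_0,D_1$ of sizes $d_0,d_1$, a polynomial loop $B\colon\mathbb{T}\to\mathrm{U}_b(\mathbb{C})$ and $V\in\mathrm{U}_N(\mathbb{C})$ with $A(z)=V\,(D_0(z)\oplus B(z)\oplus D_1(z))$ (block diagonal). $A_{i,j}(z)$ are the entries of $A(z)$; $\mathbb{T}$ is the unit circle with normalized Haar measure. *)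

theory Defs
  imports "HOL-Analysis.Analysis" "Jordan_Normal_Form.Schur_Decomposition"
begin

definition unitary_mat :: "nat \<Rightarrow> complex mat \<Rightarrow> bool" where
  "unitary_mat n U \<longleftrightarrow> U \<in> carrier_mat n n \<and> U * mat_adjoint U = 1\<^sub>m n \<and> mat_adjoint U * U = 1\<^sub>m n"

definition poly_mat_fun :: "nat \<Rightarrow> nat \<Rightarrow> (nat \<Rightarrow> complex mat) \<Rightarrow> complex \<Rightarrow> complex mat" where
  "poly_mat_fun n deg C z = mat n n (\<lambda>(i,j). \<Sum>k<deg. z ^ k * C k $$ (i,j))"

definition poly_loop :: "nat \<Rightarrow> (complex \<Rightarrow> complex mat) \<Rightarrow> bool" where
  "poly_loop n L \<longleftrightarrow> (\<exists>deg C. (\<forall>k<deg. C k \<in> carrier_mat n n) \<and>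
      (\<forall>z. cmod z = 1 \<longrightarrow> L z = poly_mat_fun n deg C z \<and> unitary_mat n (L z)))"

definition diagonal_loop :: "nat \<Rightarrow> (complex \<Rightarrow> complex mat) \<Rightarrow> bool" where
  "diagonal_loop d D \<longleftrightarrow> (\<exists>V (e :: nat \<Rightarrow> nat). unitary_mat d V \<and>
      (\<forall>z. cmod z = 1 \<longrightarrow> D z = V * mat d d (\<lambda>(i,j). if i = j then z ^ e i else 0)))"

definition block_diag3 :: "nat \<Rightarrow> nat \<Rightarrow> nat \<Rightarrow> complex mat \<Rightarrow> complex mat \<Rightarrow> complex mat \<Rightarrow> complex mat" where
  "block_diag3 d0 b d1 X0 X1 X2 =
     four_block_mat X0 (0\<^sub>m d0 (b + d1)) (0\<^sub>m (b + d1) d0)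
       (four_block_mat X1 (0\<^sub>m b d1) (0\<^sub>m d1 b) X2)"

definition purely_non_diagonal :: "nat \<Rightarrow> (complex \<Rightarrow> complex mat) \<Rightarrow> bool" where
  "purely_non_diagonal N A \<longleftrightarrow> \<not> (\<exists>d0 b d1 D0 B D1 V.
      N = d0 + b + d1 \<and> (d0 > 0 \<or> d1 > 0) \<and>
      diagonal_loop d0 D0 \<and> diagonal_loop d1 D1 \<and> poly_loop b B \<and> unitary_mat N V \<and>
      (\<forall>z. cmod z = 1 \<longrightarrow> A z = V * block_diag3 d0 b d1 (D0 z) (B z) (D1 z)))"

text \<open>Parametrisation of the unit circle; integrating over t \<in> [0,1] gives normalized Haar measure.\<close>
definition circ :: "real \<Rightarrow> complex" where
  "circ t = cis (2 * pi * t)"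

definition l2_inner :: "(complex \<Rightarrow> complex) \<Rightarrow> (complex \<Rightarrow> complex) \<Rightarrow> complex" where
  "l2_inner f h = integral {0..1} (\<lambda>t. cnj (f (circ t)) * h (circ t))"

definition filter_m :: "nat \<Rightarrow> (complex \<Rightarrow> complex mat) \<Rightarrow> nat \<Rightarrow> complex \<Rightarrow> complex" where
  "filter_m N A i z = (\<Sum>j<N. A (z ^ N) $$ (i,j) * z ^ j)"

definition T_op :: "nat \<Rightarrow> (complex \<Rightarrow> complex mat) \<Rightarrow> nat \<Rightarrow> (complex \<Rightarrow> complex) \<Rightarrow> (complex \<Rightarrow> complex)" where
  "T_op N A i f = (\<lambda>z. filter_m N A i z * f (z ^ N))"

text \<open>Matrix of V_i = P T_i|_K in the orthonormal basis e_k(z) = z^{-k}, 0 \<le> k < n: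
  (V_i)_{l,k} = <e_l, T_i e_k>.\<close>
definition V_mat :: "nat \<Rightarrow> (complex \<Rightarrow> complex mat) \<Rightarrow> nat \<Rightarrow> nat \<Rightarrow> complex mat" where
  "V_mat N A n i = mat n n (\<lambda>(l,k).
     l2_inner (\<lambda>z. inverse z ^ l) (T_op N A i (\<lambda>z. inverse z ^ k)))"

definition sigma_map :: "nat \<Rightarrow> (complex \<Rightarrow> complex mat) \<Rightarrow> nat \<Rightarrow> complex mat \<Rightarrow> complex mat" where
  "sigma_map N A n X = mat n n (\<lambda>(a,b).
     \<Sum>i<N. (V_mat N A n i * X * mat_adjoint (V_mat N A n i)) $$ (a,b))"

definition is_state :: "nat \<Rightarrow> (complex mat \<Rightarrow> complex) \<Rightarrow> bool" where
  "is_state n \<rho> \<longleftrightarrow>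
     (\<forall>X\<in>carrier_mat n n. \<forall>Y\<in>carrier_mat n n. \<rho> (X + Y) = \<rho> X + \<rho> Y) \<and>
     (\<forall>c. \<forall>X\<in>carrier_mat n n. \<rho> (c \<cdot>\<^sub>m X) = c * \<rho> X) \<and>
     (\<forall>X\<in>carrier_mat n n. Im (\<rho> (mat_adjoint X * X)) = 0 \<and> Re (\<rho> (mat_adjoint X * X)) \<ge> 0) \<and>
     \<rho> (1\<^sub>m n) = 1"

definition is_faithful :: "nat \<Rightarrow> (complex mat \<Rightarrow> complex) \<Rightarrow> bool" where
  "is_faithful n \<rho> \<longleftrightarrow> (\<forall>X\<in>carrier_mat n n. \<rho> (mat_adjoint X * X) = 0 \<longrightarrow> X = 0\<^sub>m n n)"

end

theory Submission
  imports Defs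
begin


lemma adj_dim[simp]: "dim_row (mat_adjoint A) = dim_col A" "dim_col (mat_adjoint A) = dim_row A"
  unfolding mat_adjoint_def by auto

lemma adj_index[simp]: "i < dim_col A \<Longrightarrow> j < dim_row A \<Longrightarrow> mat_adjoint A $$ (i,j) = cnj (A $$ (j,i))"
  unfolding mat_adjoint_def by (simp add: mat_of_rows_index)

lemma mult_entry: "i < dim_row A \<Longrightarrow> j < dim_col B \<Longrightarrow> dim_col A = dim_row B \<Longrightarrow>
   (A * B) $$ (i,j) = (\<Sum>k<dim_row B. A $$ (i,k) * B $$ (k,j))"
  by (simp add: scalar_prod_def atLeast0LessThan)

lemma adjX_X: "X \<in> carrier_mat n m \<Longrightarrow> a < m \<Longrightarrow> b < m \<Longrightarrow>
  (mat_adjoint X * X) $$ (a,b) = (\<Sum>k<n. cnj (X $$ (k,a)) * X $$ (k,b))"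
  by (subst mult_entry) auto

lemma X_adjX: "X \<in> carrier_mat n m \<Longrightarrow> a < n \<Longrightarrow> b < n \<Longrightarrow>
  (X * mat_adjoint X) $$ (a,b) = (\<Sum>k<m. X $$ (a,k) * cnj (X $$ (b,k)))"
  by (subst mult_entry) auto

lemma circ_norm[simp]: "cmod (circ t) = 1"
  by (simp add: circ_def)

lemma circ_pow: "circ t ^ k = cis (2 * pi * real_of_int (int k) * t)"
  unfolding circ_def using Complex.DeMoivre[of "2*pi*t" k] by (simp add: mult_ac)

lemma int_exp:
  fixes m :: int
  shows "((\<lambda>t. cis (2*pi*m*t)) has_integral (if m=0 then 1 else 0)) {0..1::real}"
proof (cases "m=0")
  case True
  then show ?thesis using has_integral_const_real[of "1::complex" 0 1] by simp
next
  case False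
  define c where "c = \<i> * complex_of_real (2*pi*m)"
  have c0: "c \<noteq> 0" using False by (simp add: c_def)
  have d: "((\<lambda>x. exp (c * of_real x) / c) has_vector_derivative exp (c * of_real x)) (at x within {0..1})" for x
    apply (rule has_vector_derivative_real_field[where f="\<lambda>z. exp (c*z)/c"])
    using c0 by (auto intro!: derivative_eq_intros)
  have e: "cis (2*pi*m*t) = exp (c * of_real t)" for t
    by (simp add: cis_conv_exp c_def mult_ac)
  have "exp c = 1" unfolding c_def exp_eq_1
    by (auto intro!: exI[of _ m])
  have "((\<lambda>t. exp (c * of_real t)) has_integral (exp (c * of_real 1) / c - exp (c * of_real 0) / c)) {0..1::real}"
    by (rule fundamental_theorem_of_calculus) (auto intro: d)
  then show ?thesis using False \<open>exp c = 1\<close> by (simp add: e)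
qed

lemma int_circ_pow: "((\<lambda>t. circ t ^ k) has_integral (if k = 0 then 1 else 0)) {0..1}"
  using int_exp[of "int k"] by (simp add: circ_pow)

lemma int_circ_cnj: "((\<lambda>t. cnj (circ t) ^ q * circ t ^ p) has_integral (if p = q then 1 else 0)) {0..1}"
proof -
  have "cnj (circ t) ^ q * circ t ^ p = cis (2*pi*real_of_int (int p - int q)*t)" for t
    unfolding circ_def cis_cnj Complex.DeMoivre cis_mult by (simp add: algebra_simps)
  then show ?thesis using int_exp[of "int p - int q"] by simp
qed

lemma V_col0:
  fixes N g :: nat and C :: "nat \<Rightarrow> complex mat"
  assumes "N \<ge> 1" "g \<ge> 1" "l < n" "i < N"
  shows "V_mat N (poly_mat_fun N g C) n i $$ (l,0) = (if l = 0 then C 0 $$ (i,0) else 0)"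
proof -
  have ln: "0 < n" using assms by auto
  have eq: "cnj (inverse (circ t) ^ l) * T_op N (poly_mat_fun N g C) i (\<lambda>z. inverse z ^ 0) (circ t)
     = (\<Sum>j<N. \<Sum>p<g. C p $$ (i,j) * circ t ^ (l + N*p + j))" for t
  proof -
    have ci: "cnj (inverse (circ t)) = circ t" "inverse (cnj (circ t)) = circ t"
      by (simp_all add: circ_def cis_cnj)
    have pc: "\<And>a b. (circ t ^ a) ^ b = (circ t ^ b) ^ a" by (simp add: power_mult[symmetric] mult.commute)
    show ?thesis
      unfolding T_op_def filter_m_def poly_mat_fun_def using assms
      by (simp add: ci pc sum_distrib_left sum_distrib_right power_add power_mult algebra_simps
         sum.swap[of _ "{..<N}"])
  qed
  have "((\<lambda>t. \<Sum>j<N. \<Sum>p<g. C p $$ (i,j) * circ t ^ (l + N*p + j)) has_integral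
        (\<Sum>j<N. \<Sum>p<g. C p $$ (i,j) * (if l + N*p + j = 0 then 1 else 0))) {0..1}"
    by (intro has_integral_sum finite_lessThan has_integral_mult_right int_circ_pow)
  also have "(\<Sum>j<N. \<Sum>p<g. C p $$ (i,j) * (if l + N*p + j = 0 then 1 else 0)) =
      (\<Sum>j<N. if j = 0 then (\<Sum>p<g. if p = 0 \<and> l = 0 then C p $$ (i,j) else 0) else 0)"
    using assms by (intro sum.cong refl) (auto intro: sum.cong)
  also have "\<dots> = (if l = 0 then C 0 $$ (i,0) else 0)"
    using assms by (simp add: sum.delta')
  finally have I: "integral {0..1} (\<lambda>t. \<Sum>j<N. \<Sum>p<g. C p $$ (i,j) * circ t ^ (l + N*p + j)) = (if l = 0 then C 0 $$ (i,0) else 0)"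
    by (rule integral_unique)
  have "V_mat N (poly_mat_fun N g C) n i $$ (l,0) = integral {0..1} (\<lambda>t. cnj (inverse (circ t) ^ l) * T_op N (poly_mat_fun N g C) i (\<lambda>z. inverse z ^ 0) (circ t))"
    unfolding V_mat_def l2_inner_def using assms ln by simp
  also have "\<dots> = integral {0..1} (\<lambda>t. \<Sum>j<N. \<Sum>p<g. C p $$ (i,j) * circ t ^ (l + N*p + j))"
    by (simp only: eq)
  finally show ?thesis using I by simp
qed

lemma parseval_col0:
  fixes N g :: nat and C :: "nat \<Rightarrow> complex mat"
  assumes N: "N \<ge> 1" and U: "\<forall>z. cmod z = 1 \<longrightarrow> unitary_mat N (poly_mat_fun N g C z)"
  shows "(\<Sum>i<N. \<Sum>p<g. cnj (C p $$ (i,0)) * C p $$ (i,0)) = 1"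
proof -
  let ?A = "poly_mat_fun N g C"
  have pt: "(\<Sum>i<N. \<Sum>q<g. \<Sum>p<g. cnj (C q $$ (i,0)) * C p $$ (i,0) * (cnj (circ t) ^ q * circ t ^ p)) = 1" for t
  proof -
    have u: "unitary_mat N (?A (circ t))" using U by simp
    then have "(mat_adjoint (?A (circ t)) * ?A (circ t)) $$ (0,0) = 1"
      unfolding unitary_mat_def using N by auto
    moreover have "?A (circ t) \<in> carrier_mat N N" using u unfolding unitary_mat_def by auto
    ultimately have "(\<Sum>i<N. cnj (?A (circ t) $$ (i,0)) * ?A (circ t) $$ (i,0)) = 1"
      using N adjX_X[of "?A (circ t)" N N 0 0] by simp
    then show ?thesis using N
      unfolding poly_mat_fun_def
      by (simp add: sum_distrib_left sum_distrib_right algebra_simps)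
  qed
  have "((\<lambda>t. \<Sum>i<N. \<Sum>q<g. \<Sum>p<g. cnj (C q $$ (i,0)) * C p $$ (i,0) * (cnj (circ t) ^ q * circ t ^ p)) has_integral
     (\<Sum>i<N. \<Sum>q<g. \<Sum>p<g. cnj (C q $$ (i,0)) * C p $$ (i,0) * (if p = q then 1 else 0))) {0..1}"
    (is "(_ has_integral _) _")
    by (intro has_integral_sum finite_lessThan has_integral_mult_right int_circ_cnj)
  note H = this
  have "((\<lambda>t. 1) has_integral
     (\<Sum>i<N. \<Sum>p<g. cnj (C p $$ (i,0)) * C p $$ (i,0))) {0..1::real}"
  proof -
    have md: "\<And>x::complex. \<And>P. x * (if P then 1 else 0) = (if P then x else 0)" by simp
    show ?thesis using H by (simp add: pt md sum.delta)
  qed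
  moreover have "((\<lambda>t. 1::complex) has_integral 1) {0..1::real}"
    using has_integral_const_real[of "1::complex" 0 1] by simp
  ultimately show ?thesis using has_integral_unique by blast
qed

lemma state_col0:
  fixes N g n :: nat and C :: "nat \<Rightarrow> complex mat"
  assumes N: "N \<ge> 1" and g: "g \<ge> 1" and n: "n \<ge> 1"
    and st: "is_state n \<rho>" and fa: "is_faithful n \<rho>"
    and inv: "\<forall>X\<in>carrier_mat n n. \<rho> (sigma_map N (poly_mat_fun N g C) n X) = \<rho> X"
  shows "(\<Sum>i<N. cnj (C 0 $$ (i,0)) * C 0 $$ (i,0)) = 1"
proof -
  let ?A = "poly_mat_fun N g C"
  define Q where "Q = mat n n (\<lambda>(a,b). if a = 0 \<and> b = 0 then (1::complex) else 0)"
  define s where "s = (\<Sum>i<N. cnj (C 0 $$ (i,0)) * C 0 $$ (i,0))"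
  have Qc: "Q \<in> carrier_mat n n" unfolding Q_def by simp
  have QQ: "mat_adjoint Q * Q = Q"
  proof (rule eq_matI)
    fix a b assume ab: "a < dim_row Q" "b < dim_col Q"
    then have ab': "a < n" "b < n" using Qc by auto
    have "(\<Sum>k<n. cnj (Q $$ (k,a)) * Q $$ (k,b)) = (\<Sum>k<n. if k = 0 then Q $$ (a,b) else 0)"
      using ab' by (intro sum.cong refl) (auto simp: Q_def)
    also have "\<dots> = Q $$ (a,b)" using n by simp
    finally show "(mat_adjoint Q * Q) $$ (a,b) = Q $$ (a,b)"
      using adjX_X[OF Qc, of a b] ab' by simp
  qed (use Qc in auto)
  have Qn0: "Q \<noteq> 0\<^sub>m n n"
  proof
    assume "Q = 0\<^sub>m n n"
    then have "Q $$ (0,0) = 0\<^sub>m n n $$ (0,0)" by simp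
    then show False using n unfolding Q_def by simp
  qed
  have rQ: "\<rho> Q \<noteq> 0"
    using fa Qc Qn0 QQ unfolding is_faithful_def by metis
  have Vc: "V_mat N ?A n i \<in> carrier_mat n n" for i unfolding V_mat_def by simp
  have VQV: "(V_mat N ?A n i * Q * mat_adjoint (V_mat N ?A n i)) $$ (a,b) =
     (if a = 0 \<and> b = 0 then C 0 $$ (i,0) * cnj (C 0 $$ (i,0)) else 0)"
    if "a < n" "b < n" "i < N" for a b i
  proof -
    let ?V = "V_mat N ?A n i"
    have dims: "dim_row ?V = n" "dim_col ?V = n" "dim_row Q = n" "dim_col Q = n"
      using Vc[of i] Qc by auto
    have VQc: "?V * Q \<in> carrier_mat n n" using Vc[of i] Qc by (rule mult_carrier_mat)
    have "(?V * Q * mat_adjoint ?V) $$ (a,b) = (\<Sum>k<n. (?V * Q) $$ (a,k) * cnj (?V $$ (b,k)))"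
      using that VQc Vc[of i] Qc by (subst mult_entry) auto
    also have "\<dots> = (\<Sum>k<n. (if k = 0 then ?V $$ (a,0) else 0) * cnj (?V $$ (b,k)))"
    proof (intro sum.cong refl)
      fix k assume k: "k \<in> {..<n}"
      have "(?V * Q) $$ (a,k) = (\<Sum>c<n. ?V $$ (a,c) * Q $$ (c,k))"
        using that k dims by (subst mult_entry) auto
      also have "\<dots> = (\<Sum>c<n. if c = 0 then (if k = 0 then ?V $$ (a,0) else 0) else 0)"
        using k by (intro sum.cong refl) (auto simp: Q_def)
      also have "\<dots> = (if k = 0 then ?V $$ (a,0) else 0)" using n by simp
      finally show "(?V * Q) $$ (a,k) * cnj (?V $$ (b,k)) = (if k = 0 then ?V $$ (a,0) else 0) * cnj (?V $$ (b,k))"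
        by simp
    qed
    also have "\<dots> = ?V $$ (a,0) * cnj (?V $$ (b,0))"
      using n by (simp add: if_distrib[of "\<lambda>x. x * _"] sum.delta cong: if_cong)
    finally show ?thesis using V_col0[OF N g, of a n i C] V_col0[OF N g, of b n i C] that by auto
  qed
  have sig: "sigma_map N ?A n Q = s \<cdot>\<^sub>m Q"
  proof (rule eq_matI)
    fix a b assume ab: "a < dim_row (s \<cdot>\<^sub>m Q)" "b < dim_col (s \<cdot>\<^sub>m Q)"
    then have ab': "a < n" "b < n" using Qc by auto
    have "sigma_map N ?A n Q $$ (a,b) = (\<Sum>i<N. (V_mat N ?A n i * Q * mat_adjoint (V_mat N ?A n i)) $$ (a,b))"
      unfolding sigma_map_def using ab' by simp
    also have "\<dots> = (\<Sum>i<N. (if a = 0 \<and> b = 0 then C 0 $$ (i,0) * cnj (C 0 $$ (i,0)) else 0))"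
      using ab' VQV by simp
    also have "\<dots> = (s \<cdot>\<^sub>m Q) $$ (a,b)"
      using ab' unfolding s_def Q_def by (simp add: mult.commute)
    finally show "sigma_map N ?A n Q $$ (a,b) = (s \<cdot>\<^sub>m Q) $$ (a,b)" .
  qed (use Qc in \<open>auto simp: sigma_map_def\<close>)
  have "\<rho> (s \<cdot>\<^sub>m Q) = s * \<rho> Q" using st Qc unfolding is_state_def by blast
  then have "s * \<rho> Q = \<rho> Q" using inv Qc sig by metis
  then have "s = 1" using rQ by simp
  then show ?thesis unfolding s_def .
qed


lemma adj_adj[simp]: "mat_adjoint (mat_adjoint A) = (A :: complex mat)"
  by (rule eq_matI) auto

lemma adj_carrier: "(A :: complex mat) \<in> carrier_mat n m \<Longrightarrow> mat_adjoint A \<in> carrier_mat m n"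
  by auto

lemma adj_mult: "(A :: complex mat) \<in> carrier_mat n m \<Longrightarrow> B \<in> carrier_mat m k \<Longrightarrow>
   mat_adjoint (A * B) = mat_adjoint B * mat_adjoint A"
proof (rule eq_matI)
  fix i j assume A: "A \<in> carrier_mat n m" and B: "B \<in> carrier_mat m k"
    and ij: "i < dim_row (mat_adjoint B * mat_adjoint A)" "j < dim_col (mat_adjoint B * mat_adjoint A)"
  then have i: "i < k" and j: "j < n" by auto
  have "mat_adjoint (A * B) $$ (i,j) = cnj ((A * B) $$ (j,i))" using A B i j by simp
  also have "\<dots> = cnj (\<Sum>l<m. A $$ (j,l) * B $$ (l,i))" using A B i j by (subst mult_entry) auto
  also have "\<dots> = (\<Sum>l<m. mat_adjoint B $$ (i,l) * mat_adjoint A $$ (l,j))"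
    using A B i j by (auto simp: mult.commute intro: sum.cong)
  also have "\<dots> = (mat_adjoint B * mat_adjoint A) $$ (i,j)" using A B i j by (subst mult_entry) auto
  finally show "mat_adjoint (A * B) $$ (i,j) = (mat_adjoint B * mat_adjoint A) $$ (i,j)" .
qed auto

lemma unitary_prod:
  assumes U: "unitary_mat N U" and X: "unitary_mat N X"
  shows "unitary_mat N (mat_adjoint U * X)"
proof -
  have Uc: "U \<in> carrier_mat N N" and Xc: "X \<in> carrier_mat N N"
    and U1: "U * mat_adjoint U = 1\<^sub>m N" "mat_adjoint U * U = 1\<^sub>m N"
    and X1: "X * mat_adjoint X = 1\<^sub>m N" "mat_adjoint X * X = 1\<^sub>m N"
    using U X unfolding unitary_mat_def by auto
  have UHc: "mat_adjoint U \<in> carrier_mat N N" and XHc: "mat_adjoint X \<in> carrier_mat N N"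
    using Uc Xc by auto
  have adjW: "mat_adjoint (mat_adjoint U * X) = mat_adjoint X * U"
    using adj_mult[OF UHc Xc] by simp
  have "mat_adjoint X * U * (mat_adjoint U * X) = mat_adjoint X * (U * mat_adjoint U) * X"
    using Uc Xc UHc XHc by (simp add: assoc_mult_mat[of _ N N _ N _ N])
  also have "\<dots> = 1\<^sub>m N" using U1 X1 XHc by (simp add: right_mult_one_mat[OF XHc])
  finally have 1: "mat_adjoint (mat_adjoint U * X) * (mat_adjoint U * X) = 1\<^sub>m N" using adjW by simp
  have "mat_adjoint U * X * (mat_adjoint X * U) = mat_adjoint U * (X * mat_adjoint X) * U"
    using Uc Xc UHc XHc by (simp add: assoc_mult_mat[of _ N N _ N _ N])
  also have "\<dots> = 1\<^sub>m N" using U1 X1 UHc by (simp add: right_mult_one_mat[OF UHc])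
  finally have 2: "(mat_adjoint U * X) * mat_adjoint (mat_adjoint U * X) = 1\<^sub>m N" using adjW by simp
  show ?thesis unfolding unitary_mat_def using 1 2 UHc Xc by auto
qed

lemma block_struct:
  assumes W: "unitary_mat N W" and N: "N \<ge> 1"
    and col: "\<forall>r<N. W $$ (r,0) = (if r = 0 then 1 else 0)"
  shows "\<forall>j<N. W $$ (0,j) = (if j = 0 then 1 else 0)"
    and "unitary_mat (N-1) (mat (N-1) (N-1) (\<lambda>(i,j). W $$ (i+1,j+1)))"
proof -
  have Wc: "W \<in> carrier_mat N N" and W1: "W * mat_adjoint W = 1\<^sub>m N" "mat_adjoint W * W = 1\<^sub>m N"
    using W unfolding unitary_mat_def by auto
  have NS: "N = Suc (N-1)" using N by simp
  show row: "\<forall>j<N. W $$ (0,j) = (if j = 0 then 1 else 0)"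
  proof (intro allI impI)
    fix j assume j: "j < N"
    have "(mat_adjoint W * W) $$ (0,j) = (\<Sum>k<N. cnj (W $$ (k,0)) * W $$ (k,j))"
      using adjX_X[OF Wc, of 0 j] N j by simp
    also have "\<dots> = (\<Sum>k<N. if k = 0 then W $$ (0,j) else 0)"
      using col by (intro sum.cong refl) auto
    also have "\<dots> = W $$ (0,j)" using N by simp
    finally show "W $$ (0,j) = (if j = 0 then 1 else 0)" using W1 N j by simp
  qed
  let ?B = "mat (N-1) (N-1) (\<lambda>(i,j). W $$ (i+1,j+1))"
  have Bc: "?B \<in> carrier_mat (N-1) (N-1)" by simp
  have 1: "mat_adjoint ?B * ?B = 1\<^sub>m (N-1)"
  proof (rule eq_matI)
    fix i j assume "i < dim_row (1\<^sub>m (N-1))" "j < dim_col (1\<^sub>m (N-1))"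
    then have i: "i < N-1" and j: "j < N-1" by auto
    have "(mat_adjoint ?B * ?B) $$ (i,j) = (\<Sum>k<N-1. cnj (W $$ (Suc k,i+1)) * W $$ (Suc k,j+1))"
      using adjX_X[OF Bc, of i j] i j by simp
    also have "\<dots> = (\<Sum>k<N. cnj (W $$ (k,i+1)) * W $$ (k,j+1))"
      using row i j by (subst (2) NS, subst sum.lessThan_Suc_shift) auto
    also have "\<dots> = (mat_adjoint W * W) $$ (i+1,j+1)"
      using adjX_X[OF Wc, of "i+1" "j+1"] i j by simp
    also have "\<dots> = 1\<^sub>m (N-1) $$ (i,j)" using W1 i j by simp
    finally show "(mat_adjoint ?B * ?B) $$ (i,j) = 1\<^sub>m (N-1) $$ (i,j)" .
  qed auto
  have 2: "?B * mat_adjoint ?B = 1\<^sub>m (N-1)"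
  proof (rule eq_matI)
    fix i j assume "i < dim_row (1\<^sub>m (N-1))" "j < dim_col (1\<^sub>m (N-1))"
    then have i: "i < N-1" and j: "j < N-1" by auto
    have "(?B * mat_adjoint ?B) $$ (i,j) = (\<Sum>k<N-1. W $$ (i+1,Suc k) * cnj (W $$ (j+1,Suc k)))"
      using X_adjX[OF Bc, of i j] i j by simp
    also have "\<dots> = (\<Sum>k<N. W $$ (i+1,k) * cnj (W $$ (j+1,k)))"
      using col i j by (subst (2) NS, subst sum.lessThan_Suc_shift) auto
    also have "\<dots> = (W * mat_adjoint W) $$ (i+1,j+1)"
      using X_adjX[OF Wc, of "i+1" "j+1"] i j by simp
    also have "\<dots> = 1\<^sub>m (N-1) $$ (i,j)" using W1 i j by simp
    finally show "(?B * mat_adjoint ?B) $$ (i,j) = 1\<^sub>m (N-1) $$ (i,j)" .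
  qed auto
  show "unitary_mat (N-1) ?B" unfolding unitary_mat_def using 1 2 by simp
qed

lemma block_eq:
  assumes Wc: "W \<in> carrier_mat N N" and N: "N \<ge> 1"
    and col: "\<forall>r<N. W $$ (r,0) = (if r = 0 then 1 else 0)"
    and row: "\<forall>j<N. W $$ (0,j) = (if j = 0 then 1 else 0)"
    and X0: "X0 \<in> carrier_mat 1 1" "X0 $$ (0,0) = 1" and X2: "X2 \<in> carrier_mat 0 0"
  shows "block_diag3 1 (N-1) 0 X0 (mat (N-1) (N-1) (\<lambda>(i,j). W $$ (i+1,j+1))) X2 = W"
proof (rule eq_matI)
  fix i j assume "i < dim_row W" "j < dim_col W"
  then have i: "i < N" and j: "j < N" using Wc by auto
  show "block_diag3 1 (N-1) 0 X0 (mat (N-1) (N-1) (\<lambda>(i,j). W $$ (i+1,j+1))) X2 $$ (i,j) = W $$ (i,j)"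
    unfolding block_diag3_def using X0 X2 i j N col row
    by (cases "i = 0"; cases "j = 0") (auto simp: index_mat_four_block)
qed (use Wc X0 X2 N in \<open>auto simp: block_diag3_def\<close>)


lemma col0_const:
  fixes N g :: nat and C :: "nat \<Rightarrow> complex mat"
  assumes N: "N \<ge> 1" and g: "g \<ge> 1"
    and U: "\<forall>z. cmod z = 1 \<longrightarrow> unitary_mat N (poly_mat_fun N g C z)"
    and s1: "(\<Sum>i<N. cnj (C 0 $$ (i,0)) * C 0 $$ (i,0)) = 1"
  shows "\<forall>z i. i < N \<longrightarrow> poly_mat_fun N g C z $$ (i,0) = C 0 $$ (i,0)"
proof -
  have s2: "(\<Sum>i<N. \<Sum>p<g. cnj (C p $$ (i,0)) * C p $$ (i,0)) = 1"
    by (rule parseval_col0[OF N U])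
  define r where "r i p = (cmod (C p $$ (i,0)))^2" for i p
  have cr: "cnj (C p $$ (i,0)) * C p $$ (i,0) = complex_of_real (r i p)" for i p
    unfolding r_def using complex_norm_square[of "C p $$ (i,0)"] by (simp add: mult.commute)
  have gS: "g = Suc (g-1)" using g by simp
  have "(\<Sum>i<N. \<Sum>p<g. r i p) = (\<Sum>i<N. r i 0)"
    using s1 s2 unfolding cr of_real_sum[symmetric] by (metis of_real_eq_iff)
  moreover have "(\<Sum>i<N. \<Sum>p<g. r i p) = (\<Sum>i<N. r i 0) + (\<Sum>i<N. \<Sum>p<g-1. r i (Suc p))"
    by (subst gS, subst sum.lessThan_Suc_shift) (simp add: sum.distrib)
  ultimately have "(\<Sum>i<N. \<Sum>p<g-1. r i (Suc p)) = 0" by simp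
  moreover have "\<forall>i p. 0 \<le> r i p" unfolding r_def by simp
  ultimately have "\<forall>i<N. \<forall>p<g-1. r i (Suc p) = 0"
    by (simp add: sum_nonneg sum_nonneg_eq_0_iff)
  then have z: "\<forall>i<N. \<forall>p. 0 < p \<and> p < g \<longrightarrow> C p $$ (i,0) = 0"
    unfolding r_def by (metis Suc_less_eq Suc_pred gS norm_eq_zero zero_less_power2 less_irrefl)
  show ?thesis
  proof (intro allI impI)
    fix z i assume i: "i < N"
    have "poly_mat_fun N g C z $$ (i,0) = (\<Sum>p<g. z ^ p * C p $$ (i,0))"
      unfolding poly_mat_fun_def using i N by simp
    also have "\<dots> = (\<Sum>p<g. if p = 0 then C 0 $$ (i,0) else 0)"
      using z i by (intro sum.cong refl) auto
    also have "\<dots> = C 0 $$ (i,0)" using g by simp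
    finally show "poly_mat_fun N g C z $$ (i,0) = C 0 $$ (i,0)" .
  qed
qed

lemma adj_one[simp]: "mat_adjoint (1\<^sub>m n) = (1\<^sub>m n :: complex mat)"
  by (rule eq_matI) auto

lemma unitary_one: "unitary_mat n (1\<^sub>m n)"
  unfolding unitary_mat_def by simp

lemma diag_trivial: "diagonal_loop d (\<lambda>z. 1\<^sub>m d * mat d d (\<lambda>(i,j). if i = j then z ^ (0::nat) else 0))"
  unfolding diagonal_loop_def by (intro exI[of _ "1\<^sub>m d"] exI[of _ "\<lambda>_. 0"]) (simp add: unitary_one)

theorem corollary6p10:
  fixes N g :: nat and C :: "nat \<Rightarrow> complex mat"
  assumes "N \<ge> 2" and "g \<ge> 1"
    and "\<forall>k<g. C k \<in> carrier_mat N N"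
    and "C (g - 1) \<noteq> 0\<^sub>m N N"
    and "\<forall>z. cmod z = 1 \<longrightarrow> unitary_mat N (poly_mat_fun N g C z)"
    and "purely_non_diagonal N (poly_mat_fun N g C)"
  shows "\<not> (\<exists>\<rho>. is_state ((g * N - 1) div (N - 1) + 1) \<rho> \<and>
              is_faithful ((g * N - 1) div (N - 1) + 1) \<rho> \<and>
              (\<forall>X\<in>carrier_mat ((g * N - 1) div (N - 1) + 1) ((g * N - 1) div (N - 1) + 1).
                 \<rho> (sigma_map N (poly_mat_fun N g C) ((g * N - 1) div (N - 1) + 1) X) = \<rho> X))"
proof
  assume "\<exists>\<rho>. is_state ((g * N - 1) div (N - 1) + 1) \<rho> \<and>
              is_faithful ((g * N - 1) div (N - 1) + 1) \<rho> \<and>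
              (\<forall>X\<in>carrier_mat ((g * N - 1) div (N - 1) + 1) ((g * N - 1) div (N - 1) + 1).
                 \<rho> (sigma_map N (poly_mat_fun N g C) ((g * N - 1) div (N - 1) + 1) X) = \<rho> X)"
  then obtain \<rho> where st: "is_state ((g * N - 1) div (N - 1) + 1) \<rho>"
    and fa: "is_faithful ((g * N - 1) div (N - 1) + 1) \<rho>"
    and inv: "\<forall>X\<in>carrier_mat ((g * N - 1) div (N - 1) + 1) ((g * N - 1) div (N - 1) + 1).
                 \<rho> (sigma_map N (poly_mat_fun N g C) ((g * N - 1) div (N - 1) + 1) X) = \<rho> X"
    by blast
  have N: "N \<ge> 1" and g: "g \<ge> 1" using assms by auto
  have Cc: "\<forall>k<g. C k \<in> carrier_mat N N" and UA: "\<forall>z. cmod z = 1 \<longrightarrow> unitary_mat N (poly_mat_fun N g C z)"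
    using assms by auto
  have s1: "(\<Sum>i<N. cnj (C 0 $$ (i,0)) * C 0 $$ (i,0)) = 1"
    by (rule state_col0[OF N g _ st fa inv]) simp
  have cc: "\<forall>z i. i < N \<longrightarrow> poly_mat_fun N g C z $$ (i,0) = C 0 $$ (i,0)"
    by (rule col0_const[OF N g UA s1])
  let ?A = "poly_mat_fun N g C"
  define U where "U = ?A 1"
  have U: "unitary_mat N U" unfolding U_def using UA by simp
  have Uc: "U \<in> carrier_mat N N" and U1: "U * mat_adjoint U = 1\<^sub>m N" "mat_adjoint U * U = 1\<^sub>m N"
    using U unfolding unitary_mat_def by auto
  define W where "W z = mat_adjoint U * ?A z" for z
  have Ac: "?A z \<in> carrier_mat N N" for z unfolding poly_mat_fun_def by simp
  have Adim[simp]: "dim_row (?A z) = N" "dim_col (?A z) = N" for z unfolding poly_mat_fun_def by simp_all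
  have Udim[simp]: "dim_row U = N" "dim_col U = N" using Uc by auto
  have Wc: "W z \<in> carrier_mat N N" for z unfolding W_def using adj_carrier[OF Uc] Ac[of z] by (rule mult_carrier_mat)
  have Wu: "unitary_mat N (W z)" if "cmod z = 1" for z
    unfolding W_def using unitary_prod[OF U] UA that by simp
  have col: "\<forall>r<N. W z $$ (r,0) = (if r = 0 then 1 else 0)" for z
  proof (intro allI impI)
    fix r assume r: "r < N"
    have "W z $$ (r,0) = (\<Sum>s<N. mat_adjoint U $$ (r,s) * ?A z $$ (s,0))"
      unfolding W_def using r N Uc Ac by (subst mult_entry) auto
    also have "\<dots> = (\<Sum>s<N. cnj (U $$ (s,r)) * U $$ (s,0))"
      using r Uc cc unfolding U_def by (intro sum.cong refl) auto
    also have "\<dots> = (mat_adjoint U * U) $$ (r,0)"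
      using adjX_X[OF Uc, of r 0] r N by simp
    finally show "W z $$ (r,0) = (if r = 0 then 1 else 0)" using U1 r N by simp
  qed
  define B where "B z = mat (N-1) (N-1) (\<lambda>(i,j). W z $$ (i+1,j+1))" for z
  define D where "D d z = 1\<^sub>m d * mat d d (\<lambda>(i,j). if i = j then z ^ (0::nat) else (0::complex))" for d and z :: complex
  define C' where "C' k = mat (N-1) (N-1) (\<lambda>(i,j). (mat_adjoint U * C k) $$ (i+1,j+1))" for k
  have pl: "poly_loop (N-1) B"
    unfolding poly_loop_def
  proof (intro exI[of _ g] exI[of _ C'] conjI allI impI)
    fix k assume "k < g" show "C' k \<in> carrier_mat (N-1) (N-1)" unfolding C'_def by simp
  next
    fix z :: complex assume z: "cmod z = 1"
    show "unitary_mat (N-1) (B z)"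
      unfolding B_def using block_struct(2)[OF Wu[OF z] N col] .
    show "B z = poly_mat_fun (N-1) g C' z"
    proof (rule eq_matI)
      fix i j assume "i < dim_row (poly_mat_fun (N-1) g C' z)" "j < dim_col (poly_mat_fun (N-1) g C' z)"
      then have i: "i < N-1" and j: "j < N-1" unfolding poly_mat_fun_def by auto
      have "B z $$ (i,j) = (mat_adjoint U * ?A z) $$ (i+1,j+1)"
        unfolding B_def W_def using i j by (simp del: index_mult_mat)
      also have "\<dots> = (\<Sum>s<N. mat_adjoint U $$ (i+1,s) * ?A z $$ (s,j+1))"
        using i j by (subst mult_entry) auto
      also have "\<dots> = (\<Sum>s<N. cnj (U $$ (s,i+1)) * (\<Sum>k<g. z ^ k * C k $$ (s,j+1)))"
        using i j by (intro sum.cong refl) (auto simp: poly_mat_fun_def)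
      also have "\<dots> = (\<Sum>k<g. z ^ k * (\<Sum>s<N. cnj (U $$ (s,i+1)) * C k $$ (s,j+1)))"
        by (simp add: sum_distrib_left sum.swap[of _ "{..<g}"] mult_ac)
      also have "\<dots> = (\<Sum>k<g. z ^ k * C' k $$ (i,j))"
      proof (intro sum.cong refl)
        fix k assume k: "k \<in> {..<g}"
        then have Ck: "C k \<in> carrier_mat N N" using Cc by auto
        have "C' k $$ (i,j) = (mat_adjoint U * C k) $$ (i+1,j+1)" unfolding C'_def using i j by simp
        also have "\<dots> = (\<Sum>s<N. cnj (U $$ (s,i+1)) * C k $$ (s,j+1))"
          using i j Uc Ck by (subst mult_entry) auto
        finally show "z ^ k * (\<Sum>s<N. cnj (U $$ (s,i+1)) * C k $$ (s,j+1)) = z ^ k * C' k $$ (i,j)" by simp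
      qed
      also have "\<dots> = poly_mat_fun (N-1) g C' z $$ (i,j)" unfolding poly_mat_fun_def using i j by simp
      finally show "B z $$ (i,j) = poly_mat_fun (N-1) g C' z $$ (i,j)" .
    qed (auto simp: B_def poly_mat_fun_def)
  qed
  have D11: "D 1 z \<in> carrier_mat 1 1" "D 1 z $$ (0,0) = 1" "D 0 z \<in> carrier_mat 0 0" for z
    unfolding D_def by auto
  have decomp: "?A z = U * block_diag3 1 (N-1) 0 (D 1 z) (B z) (D 0 z)" if z: "cmod z = 1" for z
  proof -
    have row: "\<forall>j<N. W z $$ (0,j) = (if j = 0 then 1 else 0)"
      using block_struct(1)[OF Wu[OF z] N col] .
    have "block_diag3 1 (N-1) 0 (D 1 z) (B z) (D 0 z) = W z"
      unfolding B_def by (rule block_eq[OF Wc N col row D11])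
    then have "U * block_diag3 1 (N-1) 0 (D 1 z) (B z) (D 0 z) = U * (mat_adjoint U * ?A z)"
      by (simp add: W_def)
    also have "\<dots> = (U * mat_adjoint U) * ?A z"
      using assoc_mult_mat[OF Uc adj_carrier[OF Uc] Ac[of z]] by simp
    also have "\<dots> = ?A z" using U1 Ac by simp
    finally show ?thesis by simp
  qed
  have "\<exists>d0 b d1 D0 B D1 V.
      N = d0 + b + d1 \<and> (d0 > 0 \<or> d1 > 0) \<and>
      diagonal_loop d0 D0 \<and> diagonal_loop d1 D1 \<and> poly_loop b B \<and> unitary_mat N V \<and>
      (\<forall>z. cmod z = 1 \<longrightarrow> ?A z = V * block_diag3 d0 b d1 (D0 z) (B z) (D1 z))"
    apply (rule exI[of _ 1], rule exI[of _ "N-1"], rule exI[of _ 0], rule exI[of _ "D 1"],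
           rule exI[of _ B], rule exI[of _ "D 0"], rule exI[of _ U])
    using N pl U decomp diag_trivial[of 1] diag_trivial[of 0] unfolding D_def by auto
  then show False using assms(6) unfolding purely_non_diagonal_def by blast
qed

end
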